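(* Let $n,m\ge 1$, let $A_1,\dots,A_m\in\mathbb{S}^n$ and $b\in\mathbb{R}^m$ be fixed, and let $p\ge 1$ be such that $\frac{p(p+1)}{2}>\operatorname{rank}\mathcal{A}$ and such that Assumption 1 holds for $p$. Then for almost every cost matrix $C\in\mathbb{S}^n$ (i.e., for all $C$ outside a Lebesgue-null subset of $\mathbb{S}^n$), the following holds: if $Y\in\mathcal{M}_p$ is a second-order critical point of (P), then $Y$ is globally optimal for (P) and $X=YY^\top$ is globally optimal for (SDP).
   Context: $\mathbb{S}^n$ is the space of real symmetric $n\times n$ matrices; $\langle U,V\rangle=\operatorname{tr}(U^\top V)$. The linear map $\mathcal{A}:\mathbb{S}^n\to\mathbb{R}^m$ is $\mathcal{A}(X)_i=\langle A_i,X\rangle$, with adjoint $\mathcal{A}^*(\nu)=\sum_i\nu_iA_i$; $\operatorname{rank}\mathcal{A}$ is the rank of this linear map. For $C\in\mathbb{S}^n$, (SDP) is: minimize $\langle C,X\rangle$ over $X\in\mathbb{S}^n$ with $\mathcal{A}(X)=b$, $X\succeq 0$ (feasible set assumed non-empty). For $p\ge1$, $\mathcal{M}_p=\{Y\in\mathbb{R}^{n\times p}:\mathcal{A}(YY^\top)=b\}$ and (P) is: minimize $g(Y)=\langle CY,Y\rangle$ over $Y\in\mathcal{M}_p$. Assumption 1 (for a given $p$ with $\mathcal{M}_p\neq\emptyset$): either (a) $A_1Y,\dots,A_mY$ are linearly independent in $\mathbb{R}^{n\times p}$ for all $Y\in\mathcal{M}_p$, or (b) $\operatorname{span}\{A_1Y,\dots,A_mY\}$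 has the same dimension for all $Y$ in some open neighborhood of $\mathcal{M}_p$ in $\mathbb{R}^{n\times p}$. For $Y\in\mathcal{M}_p$: the tangent space is $T_Y=\{\dot Y\in\mathbb{R}^{n\times p}:\langle A_iY,\dot Y\rangle=0,\ i=1,\dots,m\}$; $G(Y)\in\mathbb{R}^{m\times m}$ has entries $G_{ij}=\langle A_iY,A_jY\rangle$; $\mu(Y)=G(Y)^\dagger\mathcal{A}(CYY^\top)$ (Moore–Penrose pseudo-inverse); $S(Y)=C-\mathcal{A}^*(\mu(Y))$. $Y$ is a (first-order) critical point of (P) if $S(Y)Y=0$, and a second-order critical point if moreover $\langle\dot Y,S(Y)\dot Y\rangle\ge0$ for all $\dot Y\in T_Y$. *)

theory Defs
  imports "HOL-Analysis.Analysis"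
begin

text \<open>Matrices are represented by Cartesian types: an n x p real matrix is
  real^'p^'n (rows indexed by 'n, columns by 'p). The Frobenius inner product
  tr(U^T V) is the built-in inner product on real^'p^'n (sum of entrywise products).\<close>

definition sym_mat :: "real^'n^'n \<Rightarrow> bool" where
  "sym_mat X \<longleftrightarrow> transpose X = X"

definition psd :: "real^'n^'n \<Rightarrow> bool" where
  "psd X \<longleftrightarrow> (\<forall>x. x \<bullet> (X *v x) \<ge> 0)"

definition Aop :: "('m::finite \<Rightarrow> real^'n^'n) \<Rightarrow> real^'n^'n \<Rightarrow> real^'m" where
  "Aop A X = (\<chi> i. A i \<bullet> X)"

definition Aadj :: "('m::finite \<Rightarrow> real^'n^'n) \<Rightarrow> real^'m \<Rightarrow> real^'n^'n" where
  "Aadj A \<nu> = (\<Sum>i\<in>UNIV. (\<nu> $ i) *\<^sub>R A i)"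

definition rankA :: "('m::finite \<Rightarrow> real^'n^'n) \<Rightarrow> nat" where
  "rankA A = dim (Aop A ` {X. sym_mat X})"

definition sdp_feasible :: "('m::finite \<Rightarrow> real^'n^'n) \<Rightarrow> real^'m \<Rightarrow> real^'n^'n \<Rightarrow> bool" where
  "sdp_feasible A b X \<longleftrightarrow> sym_mat X \<and> Aop A X = b \<and> psd X"

definition sdp_optimal :: "('m::finite \<Rightarrow> real^'n^'n) \<Rightarrow> real^'m \<Rightarrow> real^'n^'n \<Rightarrow> real^'n^'n \<Rightarrow> bool" where
  "sdp_optimal A b C X \<longleftrightarrow> sdp_feasible A b X \<and>
     (\<forall>X'. sdp_feasible A b X' \<longrightarrow> C \<bullet> X \<le> C \<bullet> X')"

definition Mp :: "('m::finite \<Rightarrow> real^'n^'n) \<Rightarrow> real^'m \<Rightarrow> (real^'p^'n) set" where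
  "Mp A b = {Y. Aop A (Y ** transpose Y) = b}"

definition gcost :: "real^'n^'n \<Rightarrow> real^'p^'n \<Rightarrow> real" where
  "gcost C Y = (C ** Y) \<bullet> Y"

definition P_optimal :: "('m::finite \<Rightarrow> real^'n^'n) \<Rightarrow> real^'m \<Rightarrow> real^'n^'n \<Rightarrow> real^'p^'n \<Rightarrow> bool" where
  "P_optimal A b C Y \<longleftrightarrow> Y \<in> Mp A b \<and> (\<forall>Y'\<in>(Mp A b :: (real^'p^'n) set). gcost C Y \<le> gcost C Y')"

definition assumption1 :: "('m::finite \<Rightarrow> real^'n^'n) \<Rightarrow> real^'m \<Rightarrow> 'p::finite itself \<Rightarrow> bool" where
  "assumption1 A b _ \<longleftrightarrow> (Mp A b :: (real^'p^'n) set) \<noteq> {} \<and>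
     ((\<forall>Y\<in>(Mp A b :: (real^'p^'n) set).
         \<forall>c::'m \<Rightarrow> real. (\<Sum>i\<in>UNIV. c i *\<^sub>R (A i ** Y)) = 0 \<longrightarrow> (\<forall>i. c i = 0))
      \<or> (\<exists>U::(real^'p^'n) set. open U \<and> Mp A b \<subseteq> U \<and>
           (\<exists>d. \<forall>Y\<in>U. dim (span (range (\<lambda>i. A i ** Y))) = d)))"

definition tangent :: "('m::finite \<Rightarrow> real^'n^'n) \<Rightarrow> real^'p^'n \<Rightarrow> (real^'p^'n) set" where
  "tangent A Y = {Yd. \<forall>i. (A i ** Y) \<bullet> Yd = 0}"

definition Gmat :: "('m::finite \<Rightarrow> real^'n^'n) \<Rightarrow> real^'p^'n \<Rightarrow> real^'m^'m" where
  "Gmat A Y = (\<chi> i j. (A i ** Y) \<bullet> (A j ** Y))"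

definition pinv :: "real^'m^'m \<Rightarrow> real^'m^'m" where
  "pinv M = (THE P. M ** P ** M = M \<and> P ** M ** P = P \<and>
                    transpose (M ** P) = M ** P \<and> transpose (P ** M) = P ** M)"

definition mu :: "('m::finite \<Rightarrow> real^'n^'n) \<Rightarrow> real^'n^'n \<Rightarrow> real^'p^'n \<Rightarrow> real^'m" where
  "mu A C Y = pinv (Gmat A Y) *v Aop A (C ** Y ** transpose Y)"

definition Smat :: "('m::finite \<Rightarrow> real^'n^'n) \<Rightarrow> real^'n^'n \<Rightarrow> real^'p^'n \<Rightarrow> real^'n^'n" where
  "Smat A C Y = C - Aadj A (mu A C Y)"

definition critical :: "('m::finite \<Rightarrow> real^'n^'n) \<Rightarrow> real^'m \<Rightarrow> real^'n^'n \<Rightarrow> real^'p^'n \<Rightarrow> bool" where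
  "critical A b C Y \<longleftrightarrow> Y \<in> Mp A b \<and> Smat A C Y ** Y = 0"

definition second_order_critical :: "('m::finite \<Rightarrow> real^'n^'n) \<Rightarrow> real^'m \<Rightarrow> real^'n^'n \<Rightarrow> real^'p^'n \<Rightarrow> bool" where
  "second_order_critical A b C Y \<longleftrightarrow> critical A b C Y \<and>
     (\<forall>Yd\<in>tangent A Y. Yd \<bullet> (Smat A C Y ** Yd) \<ge> 0)"

text \<open>Symmetric part; used to parametrize S^n from R^{n x n}.\<close>
definition sym_part :: "real^'n^'n \<Rightarrow> real^'n^'n" where
  "sym_part M = (1/2) *\<^sub>R (M + transpose M)"

end

theory Submission
  imports Defs
begin

definition outer :: "real^'n \<Rightarrow> real^'p \<Rightarrow> real^'p^'n" where
  "outer u z = (\<chi> i k. u$i * z$k)"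

lemma mat_inner: "(U::real^'p^'n) \<bullet> V = (\<Sum>i\<in>UNIV. \<Sum>j\<in>UNIV. U$i$j * V$i$j)"
  by (simp add: inner_vec_def)

lemma outer_inner: "(M::real^'p^'n) \<bullet> outer u z = u \<bullet> (M *v z)"
  by (simp add: mat_inner outer_def inner_vec_def matrix_vector_mult_def sum_distrib_left mult_ac)

lemma outer_mult: "outer u z *v x = (z \<bullet> x) *\<^sub>R u"
  by (simp add: outer_def inner_vec_def matrix_vector_mult_def vec_eq_iff sum_distrib_left sum_distrib_right mult_ac)

lemma inner_mmt: "(S::real^'n^'n) \<bullet> (Y ** transpose Y) = (S ** Y) \<bullet> (Y::real^'p^'n)"
proof -
  have "(S ** Y) \<bullet> Y = (\<Sum>i\<in>UNIV. \<Sum>k\<in>UNIV. \<Sum>j\<in>UNIV. S$i$j * Y$j$k * Y$i$k)"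
    by (simp add: mat_inner matrix_matrix_mult_def sum_distrib_right)
  also have "\<dots> = (\<Sum>i\<in>UNIV. \<Sum>j\<in>UNIV. \<Sum>k\<in>UNIV. S$i$j * Y$j$k * Y$i$k)"
    by (rule sum.cong[OF refl], rule sum.swap)
  also have "\<dots> = S \<bullet> (Y ** transpose Y)"
    by (simp add: mat_inner matrix_matrix_mult_def transpose_def sum_distrib_left mult_ac)
  finally show ?thesis by simp
qed

lemma Aadj_inner: "Aadj A \<nu> \<bullet> X = \<nu> \<bullet> Aop A X"
  unfolding Aadj_def Aop_def inner_sum_left inner_vec_def[of \<nu>] by simp

lemma axis_inner: "axis a s \<bullet> (v::real^'n) = s * v$a"
  by (metis inner_axis inner_commute inner_real_def mult.commute)

lemma axis_quad: "axis a s \<bullet> ((X::real^'n^'n) *v axis b r) = s * r * X$a$b"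
  unfolding axis_inner by (simp add: matrix_vector_mult_def axis_def if_distrib cong: if_cong)

lemma psd_diag: "psd X \<Longrightarrow> X$i$i \<ge> 0"
  using axis_quad[of i 1 X i 1] unfolding psd_def by (metis mult_1)

lemma matvec_diff: "((A::real^'n^'m) - B) *v x = A *v x - B *v x"
  by (simp add: matrix_vector_mult_def vec_eq_iff sum_subtractf algebra_simps)

lemma matvec_scale: "((k::real) *\<^sub>R (A::real^'n^'m)) *v x = k *\<^sub>R (A *v x)"
  by (simp add: matrix_vector_mult_def vec_eq_iff sum_distrib_left mult_ac)

lemma psd_pair:
  assumes S: "psd S"
  shows "psd X \<Longrightarrow> sym_mat X \<Longrightarrow> 0 \<le> S \<bullet> (X::real^'n^'n)"
proof (induction "card {j. X$j$j \<noteq> 0}" arbitrary: X rule: less_induct)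
  case less
  have symX: "X$a$b = X$b$a" for a b
    using less.prems(2) unfolding sym_mat_def by (metis transpose_def vec_lambda_beta)
  show ?case
  proof (cases "\<exists>i. X$i$i \<noteq> 0")
    case False
    have "X$a$b = 0" for a b
    proof (cases "a = b")
      case True then show ?thesis using False by auto
    next
      case ne: False
      define t where "t = - X$a$b"
      define x where "x = axis a t + axis b (1::real)"
      have "0 \<le> x \<bullet> (X *v x)" using less.prems(1) unfolding psd_def by blast
      also have "x \<bullet> (X *v x) = t*t*X$a$a + t*X$a$b + t * X$b$a + X$b$b"
        unfolding x_def by (simp add: matrix_vector_right_distrib inner_add_left inner_add_right axis_quad)
      also have "\<dots> = - 2 * (X$a$b)^2" using False symX[of a b] by (simp add: t_def power2_eq_square)
      finally show ?thesis by simp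
    qed
    then have "X = 0" by (simp add: vec_eq_iff)
    then show ?thesis by simp
  next
    case True
    then obtain i where "X$i$i \<noteq> 0" by blast
    define d where "d = X$i$i"
    have dpos: "d > 0" using psd_diag[OF less.prems(1), of i] \<open>X$i$i \<noteq> 0\<close> d_def by linarith
    define c where "c = (\<chi> a. X$a$i)"
    define X' where "X' = X - (1/d) *\<^sub>R outer c c"
    have Xai: "X *v axis i 1 = c"
      by (simp add: c_def matrix_vector_mult_def vec_eq_iff axis_def if_distrib cong: if_cong)
    have iX: "axis i 1 \<bullet> (X *v x) = c \<bullet> x" for x
      unfolding axis_inner by (simp add: matrix_vector_mult_def c_def inner_vec_def symX mult.commute)
    have cai: "c \<bullet> axis i 1 = d"
      unfolding inner_commute[of c] axis_inner by (simp add: c_def d_def)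
    have psdX': "psd X'"
      unfolding psd_def
    proof
      fix x :: "real^'n"
      define t where "t = - (c \<bullet> x) / d"
      have "0 \<le> (x + t *\<^sub>R axis i 1) \<bullet> (X *v (x + t *\<^sub>R axis i 1))"
        using less.prems(1) unfolding psd_def by blast
      also have "\<dots> = x \<bullet> (X *v x) + 2 * t * (c \<bullet> x) + t * t * d"
        by (simp add: matrix_vector_right_distrib inner_add_left inner_add_right
            matrix_vector_mult_scaleR Xai iX inner_commute cai algebra_simps axis_quad[of i t X i 1, simplified])
      also have "\<dots> = x \<bullet> (X *v x) - (c \<bullet> x)^2 / d"
        using dpos by (simp add: t_def field_simps power2_eq_square)
      also have "\<dots> = x \<bullet> (X' *v x)"
        by (simp add: X'_def matvec_diff matvec_scale outer_mult inner_diff_right inner_commute power2_eq_square)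
      finally show "0 \<le> x \<bullet> (X' *v x)" .
    qed
    have symX': "sym_mat X'"
      unfolding sym_mat_def X'_def
      by (simp add: vec_eq_iff transpose_def outer_def symX mult.commute)
    have diag': "X'$j$j = X$j$j - (c$j)^2 / d" for j
      by (simp add: X'_def outer_def power2_eq_square)
    have sub: "{j. X'$j$j \<noteq> 0} \<subset> {j. X$j$j \<noteq> 0}"
    proof
      show "{j. X'$j$j \<noteq> 0} \<subseteq> {j. X$j$j \<noteq> 0}"
      proof
        fix j assume "j \<in> {j. X'$j$j \<noteq> 0}"
        then have h: "X'$j$j \<noteq> 0" by simp
        show "j \<in> {j. X$j$j \<noteq> 0}"
        proof (rule ccontr)
          assume "j \<notin> {j. X$j$j \<noteq> 0}"
          then have "X$j$j = 0" by simp
          then have "X'$j$j \<le> 0" using diag'[of j] dpos by simp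
          then show False using psd_diag[OF psdX', of j] h by simp
        qed
      qed
      have "X'$i$i = 0" using diag'[of i] dpos by (simp add: c_def d_def power2_eq_square)
      then show "{j. X'$j$j \<noteq> 0} \<noteq> {j. X$j$j \<noteq> 0}" using \<open>X$i$i \<noteq> 0\<close> by blast
    qed
    have "card {j. X'$j$j \<noteq> 0} < card {j. X$j$j \<noteq> 0}"
      by (rule psubset_card_mono[OF _ sub]) simp
    then have ih: "0 \<le> S \<bullet> X'" using less.hyps psdX' symX' by blast
    have "S \<bullet> X = S \<bullet> X' + (1/d) * (c \<bullet> (S *v c))"
      by (simp add: X'_def inner_diff_right outer_inner)
    moreover have "0 \<le> c \<bullet> (S *v c)" using S unfolding psd_def by blast
    ultimately show ?thesis using ih dpos by simp
  qed
qed

lemma inner_matvec: "x \<bullet> ((Y::real^'p^'n) *v w) = (transpose Y *v x) \<bullet> w"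
proof -
  have "x \<bullet> (Y *v w) = (\<Sum>i\<in>UNIV. \<Sum>j\<in>UNIV. x$i * Y$i$j * w$j)"
    by (simp add: inner_vec_def matrix_vector_mult_def sum_distrib_left mult_ac)
  also have "\<dots> = (\<Sum>j\<in>UNIV. \<Sum>i\<in>UNIV. x$i * Y$i$j * w$j)" by (rule sum.swap)
  also have "\<dots> = (transpose Y *v x) \<bullet> w"
    by (simp add: inner_vec_def matrix_vector_mult_def transpose_def sum_distrib_right sum_distrib_left mult_ac)
  finally show ?thesis .
qed

lemma feasible_YYt:
  assumes "Y \<in> Mp A b"
  shows "sdp_feasible A b ((Y::real^'p^'n) ** transpose Y)"
proof -
  have "sym_mat (Y ** transpose Y)"
    unfolding sym_mat_def by (simp add: matrix_transpose_mul)
  moreover have "Aop A (Y ** transpose Y) = b" using assms unfolding Mp_def by simp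
  moreover have "psd (Y ** transpose Y)"
    unfolding psd_def
  proof
    fix x :: "real^'n"
    have "x \<bullet> ((Y ** transpose Y) *v x) = (transpose Y *v x) \<bullet> (transpose Y *v x)"
      by (simp add: matrix_vector_mul_assoc[symmetric] inner_matvec)
    then show "0 \<le> x \<bullet> ((Y ** transpose Y) *v x)" by simp
  qed
  ultimately show ?thesis unfolding sdp_feasible_def by simp
qed

lemma gcost_eq: "gcost C Y = C \<bullet> ((Y::real^'p^'n) ** transpose Y)"
  by (simp add: gcost_def inner_mmt)

lemma good_case:
  fixes A :: "'m::finite \<Rightarrow> real^'n::finite^'n" and Y :: "real^'p::finite^'n"
  assumes Y: "Y \<in> Mp A b" and soc: "second_order_critical A b C Y"
    and z: "z \<noteq> 0" "Y *v z = 0"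
  shows "P_optimal A b C Y \<and> sdp_optimal A b C (Y ** transpose Y)"
proof -
  define S where "S = Smat A C Y"
  define \<mu> where "\<mu> = mu A C Y"
  have SY: "S ** Y = 0" using soc unfolding second_order_critical_def critical_def S_def by simp
  have Ceq: "C = S + Aadj A \<mu>" by (simp add: S_def Smat_def \<mu>_def)
  have psdS: "psd S"
    unfolding psd_def
  proof
    fix u :: "real^'n"
    define Yd where "Yd = outer u z"
    have "Yd \<in> tangent A Y"
      unfolding tangent_def Yd_def
      by (simp add: outer_inner matrix_vector_mul_assoc[symmetric] z)
    then have "0 \<le> Yd \<bullet> (S ** Yd)" using soc unfolding second_order_critical_def S_def by blast
    also have "Yd \<bullet> (S ** Yd) = (S ** Yd) \<bullet> Yd" by (rule inner_commute)
    also have "\<dots> = u \<bullet> ((S ** Yd) *v z)" by (simp add: Yd_def outer_inner)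
    also have "\<dots> = u \<bullet> (S *v (Yd *v z))" by (simp add: matrix_vector_mul_assoc)
    also have "\<dots> = (z \<bullet> z) * (u \<bullet> (S *v u))"
      by (simp add: Yd_def outer_mult matrix_vector_mult_scaleR)
    finally have "0 \<le> (z \<bullet> z) * (u \<bullet> (S *v u))" .
    moreover have "z \<bullet> z > 0" using z by simp
    ultimately show "0 \<le> u \<bullet> (S *v u)" by (simp add: zero_le_mult_iff)
  qed
  have Cval: "C \<bullet> (Y ** transpose Y) = \<mu> \<bullet> b"
  proof -
    have "C \<bullet> (Y ** transpose Y) = S \<bullet> (Y ** transpose Y) + Aadj A \<mu> \<bullet> (Y ** transpose Y)"
      by (subst Ceq, rule inner_add_left)
    also have "S \<bullet> (Y ** transpose Y) = 0" by (simp add: inner_mmt SY)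
    also have "Aadj A \<mu> \<bullet> (Y ** transpose Y) = \<mu> \<bullet> b" using Y by (simp add: Aadj_inner Mp_def)
    finally show ?thesis by simp
  qed
  have opt: "C \<bullet> (Y ** transpose Y) \<le> C \<bullet> X'" if "sdp_feasible A b X'" for X'
  proof -
    have "0 \<le> S \<bullet> X'" using psd_pair[OF psdS] that unfolding sdp_feasible_def by blast
    then show ?thesis using that unfolding Cval
      by (simp add: Ceq inner_add_left Aadj_inner sdp_feasible_def)
  qed
  have "sdp_optimal A b C (Y ** transpose Y)"
    unfolding sdp_optimal_def using feasible_YYt[OF Y] opt by blast
  moreover have "P_optimal A b C Y"
    unfolding P_optimal_def gcost_eq using Y opt feasible_YYt by blast
  ultimately show ?thesis by blast
qed

definition DJ :: "'n set \<Rightarrow> real^'n^'n" where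
  "DJ I = (\<chi> i j. if i = j \<and> i \<notin> I then 1 else 0)"

lemma if01_mult[simp]: "(if P then 1 else 0) * (x::real) = (if P then x else 0)" by simp

lemma DJ_mult: "(DJ I ** (X::real^'k^'n))$i$k = (if i \<notin> I then X$i$k else 0)"
  by (simp add: DJ_def matrix_matrix_mult_def)

lemma DJ_transpose: "transpose (DJ I) = DJ I"
  by (simp add: DJ_def transpose_def vec_eq_iff)

lemma rows_span:
  fixes Y :: "real^'p^'n"
  assumes full: "\<forall>z. Y *v z = 0 \<longrightarrow> z = 0"
  shows "span (range (\<lambda>i. Y$i)) = UNIV"
proof (rule ccontr)
  assume "span (range (\<lambda>i. Y$i)) \<noteq> UNIV"
  then have "dim (range (\<lambda>i. Y$i)) < DIM(real^'p)"
    using dim_eq_full[of "range (\<lambda>i. Y$i)"] dim_subset_UNIV[of "range (\<lambda>i. Y$i)"]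
    by (simp add: dimension_def)
  then obtain x where x: "x \<noteq> 0" "\<And>y. y \<in> span (range (\<lambda>i. Y$i)) \<Longrightarrow> orthogonal x y"
    by (rule orthogonal_to_subspace_exists) blast
  have "Y *v x = 0"
  proof -
    have "x \<bullet> Y$i = 0" for i using x(2)[of "Y$i"] by (simp add: orthogonal_def span_base)
    then show ?thesis
      by (simp add: vec_eq_iff matrix_vector_mult_def inner_vec_def mult.commute)
  qed
  then show False using full x(1) by blast
qed

lemma orth_span0:
  fixes x :: "'a::euclidean_space"
  assumes "\<forall>y\<in>B. x \<bullet> y = 0" "span B = UNIV"
  shows "x = 0"
proof -
  have "x \<in> span B" using assms(2) by simp
  then have "orthogonal x x"
    by (rule orthogonal_to_span) (use assms(1) in \<open>simp add: orthogonal_def\<close>)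
  then show ?thesis by (simp add: orthogonal_def)
qed

lemma row_basis:
  fixes Y :: "real^'p^'n"
  assumes full: "\<forall>z. Y *v z = 0 \<longrightarrow> z = 0"
  obtains I where "card I = CARD('p)" "inj_on (\<lambda>i. Y$i) I" "span ((\<lambda>i. Y$i) ` I) = UNIV"
proof -
  obtain B where B: "B \<subseteq> range (\<lambda>i. Y$i)" "independent B" "range (\<lambda>i. Y$i) \<subseteq> span B"
    by (rule maximal_independent_subset)
  have spB: "span B = UNIV"
  proof -
    have "span (range (\<lambda>i. Y$i)) \<subseteq> span (span B)" using B(3) by (rule span_mono)
    then show ?thesis using rows_span[OF full] by (simp add: span_span top_unique)
  qed
  have cB: "card B = CARD('p)"
    using basis_card_eq_dim[of B UNIV] B(2) spB by simp
  define g where "g b = (SOME i. Y$i = b)" for b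
  have gb: "Y$(g b) = b" if "b \<in> B" for b
  proof -
    have "\<exists>i. Y$i = b" using B(1) that by auto
    then show ?thesis unfolding g_def by (rule someI_ex)
  qed
  define I where "I = g ` B"
  have injg: "inj_on g B" by (metis gb inj_onI)
  have img: "(\<lambda>i. Y$i) ` I = B" unfolding I_def using gb by force
  show ?thesis
  proof
    show "card I = CARD('p)" unfolding I_def using card_image[OF injg] cB by simp
    show "inj_on (\<lambda>i. Y$i) I" unfolding I_def by (auto simp: inj_on_def gb)
    show "span ((\<lambda>i. Y$i) ` I) = UNIV" using img spB by simp
  qed
qed

lemma dual_vec:
  fixes Y :: "real^'p^'n"
  assumes cI: "card I = CARD('p)" and inj: "inj_on (\<lambda>i. Y$i) I"
    and sp: "span ((\<lambda>i. Y$i) ` I) = UNIV" and k: "k \<in> I"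
  shows "\<exists>w. \<forall>i\<in>I. Y$i \<bullet> w = (if i = k then 1 else 0)"
proof -
  define B where "B = (\<lambda>i. Y$i) ` I"
  have fI: "finite I" by simp
  have cB: "card B = CARD('p)" unfolding B_def using card_image[OF inj] cI by simp
  define B' where "B' = B - {Y$k}"
  have "Y$k \<in> B" using k B_def by simp
  then have "card B' < CARD('p)" unfolding B'_def using cB
    by (metis card_Diff1_less finite_imageI fI B_def)
  then have "dim B' < DIM(real^'p)"
    using dim_le_card'[of B'] unfolding B'_def B_def by simp
  then obtain x where x: "x \<noteq> 0" "\<And>y. y \<in> span B' \<Longrightarrow> orthogonal x y"
    by (rule orthogonal_to_subspace_exists) blast
  have ne: "x \<bullet> Y$k \<noteq> 0"
  proof
    assume h: "x \<bullet> Y$k = 0"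
    have "\<forall>y\<in>B. x \<bullet> y = 0"
    proof
      fix y assume "y \<in> B"
      show "x \<bullet> y = 0"
      proof (cases "y = Y$k")
        case True then show ?thesis using h by simp
      next
        case False then have "y \<in> B'" using \<open>y \<in> B\<close> B'_def by simp
        then show ?thesis using x(2)[of y] by (simp add: orthogonal_def span_base)
      qed
    qed
    then have "x = 0" using orth_span0 sp B_def by blast
    then show False using x(1) by simp
  qed
  show ?thesis
  proof (intro exI ballI)
    fix i assume i: "i \<in> I"
    show "Y$i \<bullet> ((1 / (x \<bullet> Y$k)) *\<^sub>R x) = (if i = k then 1 else 0)"
    proof (cases "i = k")
      case True then show ?thesis using ne by (simp add: inner_commute)
    next
      case False
      then have "Y$i \<noteq> Y$k" using inj i k by (meson inj_on_eq_iff)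
      then have "Y$i \<in> B'" using i B'_def B_def by simp
      then have "x \<bullet> Y$i = 0" using x(2)[of "Y$i"] by (simp add: orthogonal_def span_base)
      then show ?thesis using False by (simp add: inner_commute)
    qed
  qed
qed

lemma matrix_sub_ldistrib: "(A::real^'n^'m) ** (B - C) = A ** B - A ** C"
  by (simp add: matrix_matrix_mult_def vec_eq_iff sum_subtractf algebra_simps)

lemma chart:
  fixes Y :: "real^'p^'n" and S :: "real^'n^'n"
  assumes full: "\<forall>z. Y *v z = 0 \<longrightarrow> z = 0" and symS: "transpose S = S" and SY: "S ** Y = 0"
  shows "\<exists>I Q. card I = CARD('p) \<and> (\<forall>i\<in>I. \<forall>k. Q$i$k = 0) \<and>
           (\<forall>i k. k \<notin> I \<longrightarrow> Q$i$k = (if i = k then 1 else 0)) \<and>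
           S = transpose Q ** (DJ I ** S ** DJ I) ** Q"
proof -
  obtain I where cI: "card I = CARD('p)" and inj: "inj_on (\<lambda>i. Y$i) I"
    and sp: "span ((\<lambda>i. Y$i) ` I) = UNIV"
    using row_basis[OF full] by blast
  have "\<forall>k\<in>I. \<exists>w. \<forall>i\<in>I. Y$i \<bullet> w = (if i = k then 1 else 0)"
    using dual_vec[OF cI inj sp] by blast
  then obtain w where w: "\<And>k i. k \<in> I \<Longrightarrow> i \<in> I \<Longrightarrow> Y$i \<bullet> w k = (if i = k then 1 else 0)"
    by metis
  define W :: "real^'n^'p" where "W = (\<chi> a k. if k \<in> I then w k $ a else 0)"
  define N where "N = Y ** W"
  have Nik: "N$i$k = (if k \<in> I then Y$i \<bullet> w k else 0)" for i k
    by (simp add: N_def W_def matrix_matrix_mult_def inner_vec_def if_distrib cong: if_cong)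
  define Q where "Q = mat 1 - N"
  have Qik: "Q$i$k = (if i = k then 1 else 0) - N$i$k" for i k
    by (simp add: Q_def mat_def)
  have SN: "S ** N = 0" by (simp add: N_def matrix_mul_assoc SY)
  have SQ: "S ** Q = S" by (simp add: Q_def matrix_sub_ldistrib SN)
  have QS: "transpose Q ** S = S"
    using arg_cong[OF SQ, of transpose] symS by (simp add: matrix_transpose_mul)
  have Q1: "\<forall>i\<in>I. \<forall>k. Q$i$k = 0"
    by (auto simp: Qik Nik w)
  have Q2: "\<forall>i k. k \<notin> I \<longrightarrow> Q$i$k = (if i = k then 1 else 0)"
    by (auto simp: Qik Nik)
  have DQ: "DJ I ** Q = Q"
    by (simp add: vec_eq_iff DJ_mult Q1)
  have "S = transpose Q ** S ** Q" using QS SQ by (simp add: matrix_mul_assoc)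
  also have "\<dots> = transpose (DJ I ** Q) ** S ** (DJ I ** Q)" by (simp add: DQ)
  also have "\<dots> = transpose Q ** (DJ I ** S ** DJ I) ** Q"
    by (simp add: matrix_transpose_mul DJ_transpose matrix_mul_assoc)
  finally show ?thesis using cI Q1 Q2 by blast
qed

lemma neg_subspace_image:
  fixes f :: "'M::euclidean_space \<Rightarrow> 'N::euclidean_space"
  assumes S: "subspace S" and d: "dim S < DIM('N)" and f: "f differentiable_on S"
  shows "negligible (f ` S)"
proof -
  have "dim S \<le> dim (UNIV::'N set)" using d by simp
  then obtain T :: "'N set" where T: "subspace T" "dim T = dim S"
    using choose_subspace_of_subspace[of "dim S" "UNIV::'N set"] by blast
  obtain g :: "'N \<Rightarrow> 'M" where g: "linear g" "g ` T = S" "inj_on g T"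
    using subspace_isomorphism[OF T(1) S T(2)] by blast
  have negT: "negligible T" using negligible_lowdim[of T] T(2) d by simp
  have "(\<lambda>x. f (g x)) differentiable_on T"
    by (rule differentiable_on_compose)
       (use g f in \<open>auto intro: bounded_linear_imp_differentiable_on simp: linear_conv_bounded_linear\<close>)
  then have "negligible ((\<lambda>x. f (g x)) ` T)"
    using negligible_differentiable_image_negligible[OF order_refl negT] by blast
  moreover have "(\<lambda>x. f (g x)) ` T = f ` S" using g(2) by auto
  ultimately show ?thesis by simp
qed

lemma bilinear_mm: "bounded_bilinear (\<lambda>(A::real^'a^'b) (B::real^'c^'a). A ** B)"
proof -
  have "bilinear (\<lambda>(A::real^'a^'b) (B::real^'c^'a). A ** B)"
    unfolding bilinear_def
    by (auto intro!: linearI simp: vec_eq_iff matrix_matrix_mult_def sum_distrib_left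
        sum.distrib algebra_simps)
  then show ?thesis by (simp add: bilinear_conv_bounded_bilinear)
qed

lemma mm_differentiable:
  fixes f :: "'x::real_normed_vector \<Rightarrow> real^'a^'b" and g :: "'x \<Rightarrow> real^'c^'a"
  assumes "f differentiable (at x)" "g differentiable (at x)"
  shows "(\<lambda>x. f x ** g x) differentiable (at x)"
proof -
  obtain f' g' where "(f has_derivative f') (at x)" "(g has_derivative g') (at x)"
    using assms unfolding differentiable_def by blast
  from bounded_bilinear.FDERIV[OF bilinear_mm this]
  show ?thesis unfolding differentiable_def by (auto simp del: split_paired_Ex)
qed

lemma transpose_bl: "bounded_linear (transpose :: real^'a^'b \<Rightarrow> real^'b^'a)"
  by (auto intro!: linearI simp: linear_conv_bounded_linear[symmetric] transpose_def vec_eq_iff)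

definition Fmap :: "'n set \<Rightarrow> (real^'n^'n) \<times> (real^'n^'n) \<times> (real^'n^'n) \<times> (real^'n^'n) \<Rightarrow> real^'n^'n" where
  "Fmap I t = transpose (DJ I - fst t) ** fst (snd t) ** (DJ I - fst t) + fst (snd (snd t)) + snd (snd (snd t))"

lemma Fmap_diff:
  fixes I :: "'n::finite set"
  shows "Fmap I differentiable_on S"
proof -
  have bl1: "bounded_linear (\<lambda>t::(real^'n^'n) \<times> (real^'n^'n) \<times> (real^'n^'n) \<times> (real^'n^'n). fst t)"
    by (rule bounded_linear_fst)
  have d1: "(\<lambda>t::(real^'n^'n) \<times> (real^'n^'n) \<times> (real^'n^'n) \<times> (real^'n^'n). DJ I - fst t) differentiable (at x)" for x
    by (intro differentiable_diff differentiable_const bounded_linear_imp_differentiable bl1)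
  have d2: "(\<lambda>t::(real^'n^'n) \<times> (real^'n^'n) \<times> (real^'n^'n) \<times> (real^'n^'n). transpose (DJ I - fst t)) differentiable (at x)" for x
    using differentiable_compose[OF bounded_linear_imp_differentiable[OF transpose_bl] d1] by (simp add: o_def)
  have d3: "(\<lambda>t::(real^'n^'n) \<times> (real^'n^'n) \<times> (real^'n^'n) \<times> (real^'n^'n). fst (snd t)) differentiable (at x)" for x
    by (intro bounded_linear_imp_differentiable bounded_linear_compose[OF bounded_linear_fst bounded_linear_snd])
  have d4: "(\<lambda>t::(real^'n^'n) \<times> (real^'n^'n) \<times> (real^'n^'n) \<times> (real^'n^'n). fst (snd (snd t))) differentiable (at x)" for x
    by (intro bounded_linear_imp_differentiable bounded_linear_compose[OF bounded_linear_fst]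
        bounded_linear_compose[OF bounded_linear_snd bounded_linear_snd])
  have d5: "(\<lambda>t::(real^'n^'n) \<times> (real^'n^'n) \<times> (real^'n^'n) \<times> (real^'n^'n). snd (snd (snd t))) differentiable (at x)" for x
    by (intro bounded_linear_imp_differentiable bounded_linear_compose[OF bounded_linear_snd]
        bounded_linear_compose[OF bounded_linear_snd bounded_linear_snd])
  have "Fmap I differentiable (at x)" for x
    unfolding Fmap_def
    by (intro differentiable_add mm_differentiable d1 d2 d3 d4 d5)
  then show ?thesis by (simp add: differentiable_at_imp_differentiable_on)
qed

definition Eij :: "'n \<Rightarrow> 'n \<Rightarrow> real^'n^'n" where
  "Eij j k = (\<chi> a b. if a = j \<and> b = k then 1 else 0)"

definition pr :: "'n set \<Rightarrow> 'n \<times> 'n" where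
  "pr s = (SOME q. s = {fst q, snd q})"

definition Esym :: "'n set \<Rightarrow> real^'n^'n" where
  "Esym s = (\<chi> x y. if {x,y} = s then 1 else 0)"

definition Eskew :: "'n set \<Rightarrow> real^'n^'n" where
  "Eskew s = (\<chi> x y. if {x,y} = s \<and> x \<noteq> y then (if (x,y) = pr s then 1 else -1) else 0)"

lemma pr_eq: "pr {a,b} = (a,b) \<or> pr {a,b} = (b,a)"
proof -
  have "\<exists>q. {a,b} = {fst q, snd q}" by (rule exI[of _ "(a,b)"]) simp
  then have "{a,b} = {fst (pr {a,b}), snd (pr {a,b})}" unfolding pr_def by (rule someI_ex)
  then show ?thesis by (metis doubleton_eq_iff prod.collapse)
qed

lemma G1_mem:
  fixes Z :: "real^'n::finite^'n"
  assumes "\<forall>i k. Z$i$k \<noteq> 0 \<longrightarrow> i \<notin> I \<and> k \<in> I"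
  shows "Z \<in> span ((\<lambda>q. Eij (fst q) (snd q)) ` ((- I) \<times> I))"
proof -
  have "Z = (\<Sum>q\<in>((- I) \<times> I). Z$(fst q)$(snd q) *\<^sub>R Eij (fst q) (snd q))"
  proof -
    have "(\<Sum>q\<in>((- I) \<times> I). Z$(fst q)$(snd q) * (if a = fst q \<and> b = snd q then 1 else 0)) = Z$a$b" for a b
    proof -
      have "(\<Sum>q\<in>((- I) \<times> I). Z$(fst q)$(snd q) * (if a = fst q \<and> b = snd q then 1 else 0))
          = (\<Sum>q\<in>((- I) \<times> I). if q = (a,b) then Z$a$b else 0)"
        by (rule sum.cong) auto
      also have "\<dots> = Z$a$b" using assms by auto
      finally show ?thesis .
    qed
    then show ?thesis by (simp add: vec_eq_iff Eij_def)
  qed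
  also have "\<dots> \<in> span ((\<lambda>q. Eij (fst q) (snd q)) ` ((- I) \<times> I))"
    by (intro span_sum span_scale span_base) auto
  finally show ?thesis .
qed

lemma G2_mem:
  fixes R :: "real^'n::finite^'n"
  assumes sym: "\<forall>i k. R$i$k = R$k$i" and supp: "\<forall>i k. R$i$k \<noteq> 0 \<longrightarrow> i \<in> J \<and> k \<in> J"
  shows "R \<in> span (Esym ` {s. s \<subseteq> J \<and> (card s = 1 \<or> card s = 2)})"
proof -
  let ?P = "{s. s \<subseteq> J \<and> (card s = 1 \<or> card s = 2)}"
  have "R = (\<Sum>s\<in>?P. R$(fst (pr s))$(snd (pr s)) *\<^sub>R Esym s)"
  proof -
    have "(\<Sum>s\<in>?P. R$(fst (pr s))$(snd (pr s)) * (if {a,b} = s then 1 else 0)) = R$a$b" for a b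
    proof -
      have "(\<Sum>s\<in>?P. R$(fst (pr s))$(snd (pr s)) * (if {a,b} = s then 1 else 0))
          = (\<Sum>s\<in>?P. if s = {a,b} then R$(fst (pr {a,b}))$(snd (pr {a,b})) else 0)"
        by (rule sum.cong) auto
      also have "\<dots> = (if {a,b} \<in> ?P then R$(fst (pr {a,b}))$(snd (pr {a,b})) else 0)"
        by simp
      also have "\<dots> = R$a$b"
      proof (cases "a \<in> J \<and> b \<in> J")
        case True
        have "{a,b} \<in> ?P" using True by (auto simp: card_insert_if)
        moreover have "R$(fst (pr {a,b}))$(snd (pr {a,b})) = R$a$b"
          using pr_eq[of a b] sym[rule_format, of b a] by auto
        ultimately show ?thesis by simp
      next
        case False
        then have "{a,b} \<notin> ?P" by auto
        moreover have "R$a$b = 0" using False supp by blast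
        ultimately show ?thesis by (subst if_not_P) auto
      qed
      finally show ?thesis .
    qed
    then show ?thesis by (simp add: vec_eq_iff Esym_def)
  qed
  also have "\<dots> \<in> span (Esym ` ?P)"
    by (intro span_sum span_scale span_base) auto
  finally show ?thesis .
qed

lemma G4_mem:
  fixes K :: "real^'n::finite^'n"
  assumes skew: "\<forall>i k. K$i$k = - K$k$i"
  shows "K \<in> span (Eskew ` {s. card s = 2})"
proof -
  let ?P = "{s::'n set. card s = 2}"
  have "K = (\<Sum>s\<in>?P. K$(fst (pr s))$(snd (pr s)) *\<^sub>R Eskew s)"
  proof -
    have "(\<Sum>s\<in>?P. K$(fst (pr s))$(snd (pr s)) * (if {a,b} = s \<and> a \<noteq> b then (if (a,b) = pr s then 1 else -1) else 0)) = K$a$b" for a b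
    proof (cases "a = b")
      case True
      have "K$a$a = - K$a$a" using skew by blast
      then have "K$a$b = 0" using True by simp
      then show ?thesis using True by simp
    next
      case False
      have "(\<Sum>s\<in>?P. K$(fst (pr s))$(snd (pr s)) * (if {a,b} = s \<and> a \<noteq> b then (if (a,b) = pr s then 1 else -1) else 0))
          = (\<Sum>s\<in>?P. if s = {a,b} then K$(fst (pr {a,b}))$(snd (pr {a,b})) * (if (a,b) = pr {a,b} then 1 else -1) else 0)"
        by (rule sum.cong) (auto simp: False)
      also have "\<dots> = K$(fst (pr {a,b}))$(snd (pr {a,b})) * (if (a,b) = pr {a,b} then 1 else -1)"
        using False by simp
      also have "\<dots> = K$a$b"
      proof -
        have "K$b$a = - K$a$b" using skew by blast
        then show ?thesis using pr_eq[of a b] False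
          by (cases "pr {a,b} = (a,b)") auto
      qed
      finally show ?thesis .
    qed
    then show ?thesis by (simp add: vec_eq_iff Eskew_def)
  qed
  also have "\<dots> \<in> span (Eskew ` ?P)"
    by (intro span_sum span_scale span_base) auto
  finally show ?thesis .
qed

lemma sym_mat_iff: "sym_mat X \<longleftrightarrow> (\<forall>a b. X$a$b = X$b$a)"
  unfolding sym_mat_def by (auto simp: vec_eq_iff transpose_def)

lemma dim_rangeA_le:
  fixes A :: "'m::finite \<Rightarrow> real^'n::finite^'n"
  assumes symA: "\<forall>i. sym_mat (A i)"
  shows "dim (range A) \<le> rankA A"
proof -
  have lin: "linear (Aop A)"
    by (auto intro!: linearI simp: Aop_def vec_eq_iff inner_add_right)
  have z: "X = 0" if X: "X \<in> span (range A)" "Aop A X = 0" for X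
  proof -
    have "\<forall>i. A i \<bullet> X = 0" using X(2) by (simp add: Aop_def vec_eq_iff)
    then have "orthogonal X X"
      by (intro orthogonal_to_span[OF X(1)]) (auto simp: orthogonal_def inner_commute)
    then show ?thesis by (simp add: orthogonal_def)
  qed
  have inj: "inj_on (Aop A) (span (range A))"
  proof (rule inj_onI)
    fix x y assume xy: "x \<in> span (range A)" "y \<in> span (range A)" "Aop A x = Aop A y"
    have "Aop A (x - y) = 0" using xy(3) linear_diff[OF lin] by simp
    moreover have "x - y \<in> span (range A)" using xy by (simp add: span_diff)
    ultimately have "x - y = 0" using z by blast
    then show "x = y" by simp
  qed
  have "dim (Aop A ` range A) = dim (range A)" by (rule dim_image_eq[OF lin inj])
  moreover have "Aop A ` range A \<subseteq> Aop A ` {X. sym_mat X}" using symA by auto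
  ultimately show ?thesis unfolding rankA_def by (metis dim_subset)
qed

lemma mult01_if[simp]: "(x::real) * (if P then 1 else 0) = (if P then x else 0)" by simp

lemma mult_DJ: "((X::real^'n^'k) ** DJ I)$i$k = (if k \<notin> I then X$i$k else 0)"
  by (simp add: DJ_def matrix_matrix_mult_def conj_commute[of "_ = k"] cong: conj_cong)

lemma choose2: "2 * (x choose 2) + x = x * (x::nat)"
proof -
  have "even (x * (x - 1))" by (cases "even x") auto
  then have "2 * (x * (x - 1) div 2) = x * (x - 1)" by simp
  then show ?thesis unfolding choose_two by (cases x) auto
qed

lemma count_arith:
  fixes n p c r q N2 :: nat
  assumes "n = c + p" "2 * q + c = c * c" "2 * N2 + n = n * n" "r < p * (p + 1) div 2"
  shows "c * p + (c + q) + r + N2 < n * n"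
proof -
  have "2 * r + 2 \<le> p * p + p" using assms(4) by (simp add: algebra_simps)
  moreover have "n * n = c * c + 2 * (c * p) + p * p" using assms(1) by (simp add: algebra_simps)
  ultimately show ?thesis using assms(1,2,3) by linarith
qed

definition GG :: "'n::finite set \<Rightarrow> (real^'n^'n) set \<Rightarrow> ((real^'n^'n) \<times> (real^'n^'n) \<times> (real^'n^'n) \<times> (real^'n^'n)) set" where
  "GG I B = (\<lambda>z. (z,0,0,0)) ` ((\<lambda>q. Eij (fst q) (snd q)) ` ((- I) \<times> I))
          \<union> (\<lambda>r. (0,r,0,0)) ` (Esym ` {s. s \<subseteq> - I \<and> (card s = 1 \<or> card s = 2)})
          \<union> (\<lambda>x. (0,0,x,0)) ` B
          \<union> (\<lambda>k. (0,0,0,k)) ` (Eskew ` {s. card s = 2})"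

lemma finite_GG: "finite B \<Longrightarrow> finite (GG I B)"
  unfolding GG_def by simp

lemma card_Un4: "card (A \<union> B \<union> C \<union> D) \<le> card A + card B + card C + card D"
  using card_Un_le[of "A \<union> B \<union> C" D] card_Un_le[of "A \<union> B" C] card_Un_le[of A B] by linarith

lemma card_img2: "finite X \<Longrightarrow> card (f ` (g ` X)) \<le> card X"
  by (rule order.trans[OF card_image_le card_image_le]) simp_all

lemma card_GG:
  fixes I :: "'n::finite set"
  assumes "finite B"
  shows "card (GG I B) \<le> card (- I) * card I + (card (- I) + (card (- I) choose 2)) + card B + (CARD('n) choose 2)"
proof -
  let ?J = "- I"
  have c1: "card ((\<lambda>z. (z,0::real^'n^'n,0::real^'n^'n,0::real^'n^'n)) ` ((\<lambda>q. Eij (fst q) (snd q)) ` (?J \<times> I))) \<le> card ?J * card I"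
    using card_img2[of "?J \<times> I" "\<lambda>z. (z,0::real^'n^'n,0::real^'n^'n,0::real^'n^'n)" "\<lambda>q. Eij (fst q) (snd q)"] by (simp add: card_cartesian_product)
  have "card {s. s \<subseteq> ?J \<and> (card s = 1 \<or> card s = 2)} \<le> card {s. s \<subseteq> ?J \<and> card s = 1} + card {s. s \<subseteq> ?J \<and> card s = 2}"
  proof -
    have "{s. s \<subseteq> ?J \<and> (card s = 1 \<or> card s = 2)} = {s. s \<subseteq> ?J \<and> card s = 1} \<union> {s. s \<subseteq> ?J \<and> card s = 2}" by auto
    then show ?thesis using card_Un_le by simp
  qed
  also have "\<dots> = card ?J + (card ?J choose 2)" by (simp add: n_subsets)
  finally have c2': "card {s. s \<subseteq> ?J \<and> (card s = 1 \<or> card s = 2)} \<le> card ?J + (card ?J choose 2)" .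
  have c2: "card ((\<lambda>r. (0::real^'n^'n,r,0::real^'n^'n,0::real^'n^'n)) ` (Esym ` {s. s \<subseteq> ?J \<and> (card s = 1 \<or> card s = 2)})) \<le> card ?J + (card ?J choose 2)"
    using card_img2[of "{s. s \<subseteq> ?J \<and> (card s = 1 \<or> card s = 2)}" "\<lambda>r. (0::real^'n^'n,r,0::real^'n^'n,0::real^'n^'n)" Esym] c2' by simp
  have c3: "card ((\<lambda>x. (0::real^'n^'n,0::real^'n^'n,x,0::real^'n^'n)) ` B) \<le> card B"
    using assms by (rule card_image_le)
  have "card {s::'n set. card s = 2} = CARD('n) choose 2"
    using n_subsets[of "UNIV::'n set" 2] by simp
  then have c4: "card ((\<lambda>k. (0::real^'n^'n,0::real^'n^'n,0::real^'n^'n,k)) ` (Eskew ` {s::'n set. card s = 2})) \<le> CARD('n) choose 2"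
    using card_img2[of "{s::'n set. card s = 2}" "\<lambda>k. (0::real^'n^'n,0::real^'n^'n,0::real^'n^'n,k)" Eskew] by simp
  show ?thesis unfolding GG_def
    by (rule order.trans[OF card_Un4]) (use c1 c2 c3 c4 in linarith)
qed

lemma neg_piece:
  fixes I :: "'n::finite set"
  assumes cI: "card I = CARD('p::finite)" and fB: "finite B"
    and rB: "card B < CARD('p) * (CARD('p) + 1) div 2"
  shows "negligible (Fmap I ` span (GG I B))"
proof (rule neg_subspace_image)
  show "subspace (span (GG I B))" by simp
  show "Fmap I differentiable_on span (GG I B)" by (rule Fmap_diff)
  have "dim (span (GG I B)) \<le> card (GG I B)"
    by (rule dim_le_card) (auto simp: finite_GG fB)
  also have "\<dots> \<le> card (- I) * card I + (card (- I) + (card (- I) choose 2)) + card B + (CARD('n) choose 2)"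
    by (rule card_GG[OF fB])
  also have "\<dots> < CARD('n) * CARD('n)"
  proof (rule count_arith)
    have "card I \<le> CARD('n)" by (rule card_mono) auto
    moreover have "card (- I) = CARD('n) - card I" by (simp add: Compl_eq_Diff_UNIV card_Diff_subset)
    ultimately show "CARD('n) = card (- I) + card I" by simp
    show "2 * (card (- I) choose 2) + card (- I) = card (- I) * card (- I)" by (rule choose2)
    show "2 * (CARD('n) choose 2) + CARD('n) = CARD('n) * CARD('n)" by (rule choose2)
    show "card B < card I * (card I + 1) div 2" using rB cI by simp
  qed
  finally show "dim (span (GG I B)) < DIM(real^'n^'n)" by simp
qed

lemma GG_mem:
  fixes I :: "'n::finite set"
  assumes Z: "\<forall>i k. Z$i$k \<noteq> 0 \<longrightarrow> i \<notin> I \<and> k \<in> I"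
    and Rs: "\<forall>i k. R$i$k = R$k$i" and Rsupp: "\<forall>i k. R$i$k \<noteq> 0 \<longrightarrow> i \<in> - I \<and> k \<in> - I"
    and X: "X \<in> span B"
    and K: "\<forall>i k. K$i$k = - K$k$i"
  shows "(Z, R, X, K) \<in> span (GG I B)"
proof -
  have l1: "linear (\<lambda>z::real^'n^'n. (z, 0::real^'n^'n, 0::real^'n^'n, 0::real^'n^'n))"
    by (auto intro!: linearI)
  have l2: "linear (\<lambda>z::real^'n^'n. (0::real^'n^'n, z, 0::real^'n^'n, 0::real^'n^'n))"
    by (auto intro!: linearI)
  have l3: "linear (\<lambda>z::real^'n^'n. (0::real^'n^'n, 0::real^'n^'n, z, 0::real^'n^'n))"
    by (auto intro!: linearI)
  have l4: "linear (\<lambda>z::real^'n^'n. (0::real^'n^'n, 0::real^'n^'n, 0::real^'n^'n, z))"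
    by (auto intro!: linearI)
  have "(Z,0,0,0) \<in> (\<lambda>z::real^'n^'n. (z, 0::real^'n^'n, 0::real^'n^'n, 0::real^'n^'n)) ` span ((\<lambda>q. Eij (fst q) (snd q)) ` ((- I) \<times> I))"
    using G1_mem[OF Z] by blast
  also have "\<dots> \<subseteq> span (GG I B)"
    unfolding span_linear_image[OF l1, symmetric] by (rule span_mono) (auto simp: GG_def)
  finally have t1: "(Z,0,0,0) \<in> span (GG I B)" .
  have "(0,R,0,0) \<in> (\<lambda>z::real^'n^'n. (0::real^'n^'n, z, 0::real^'n^'n, 0::real^'n^'n)) ` span (Esym ` {s. s \<subseteq> - I \<and> (card s = 1 \<or> card s = 2)})"
    using G2_mem[OF Rs Rsupp] by blast
  also have "\<dots> \<subseteq> span (GG I B)"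
    unfolding span_linear_image[OF l2, symmetric] by (rule span_mono) (auto simp: GG_def)
  finally have t2: "(0,R,0,0) \<in> span (GG I B)" .
  have "(0,0,X,0) \<in> (\<lambda>z::real^'n^'n. (0::real^'n^'n, 0::real^'n^'n, z, 0::real^'n^'n)) ` span B"
    using X by blast
  also have "\<dots> \<subseteq> span (GG I B)"
    unfolding span_linear_image[OF l3, symmetric] by (rule span_mono) (auto simp: GG_def)
  finally have t3: "(0,0,X,0) \<in> span (GG I B)" .
  have "(0,0,0,K) \<in> (\<lambda>z::real^'n^'n. (0::real^'n^'n, 0::real^'n^'n, 0::real^'n^'n, z)) ` span (Eskew ` {s. card s = 2})"
    using G4_mem[OF K] by blast
  also have "\<dots> \<subseteq> span (GG I B)"
    unfolding span_linear_image[OF l4, symmetric] by (rule span_mono) (auto simp: GG_def)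
  finally have t4: "(0,0,0,K) \<in> span (GG I B)" .
  have "(Z,R,X,K) = (Z,0,0,0) + (0,R,0,0) + (0,0,X,0) + (0,0,0,K)" by simp
  then show ?thesis using t1 t2 t3 t4 by (metis span_add)
qed

theorem theorem1:
  fixes A :: "'m::finite \<Rightarrow> real^'n::finite^'n"
    and b :: "real^'m"
    and p :: "'p::finite itself"
  assumes symA: "\<forall>i. sym_mat (A i)"
    and feas: "\<exists>X. sdp_feasible A b X"
    and rank: "CARD('p) * (CARD('p) + 1) div 2 > rankA A"
    and ass1: "assumption1 A b TYPE('p)"
  shows "\<exists>N \<in> null_sets (lborel :: (real^'n^'n) measure).
           \<forall>M. M \<notin> N \<longrightarrow>
             (let C = sym_part M in
               \<forall>Y :: real^'p^'n. Y \<in> Mp A b \<and> second_order_critical A b C Y \<longrightarrow>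
                 P_optimal A b C Y \<and> sdp_optimal A b C (Y ** transpose Y))"
proof -
  obtain B where B: "B \<subseteq> range A" "independent B" "range A \<subseteq> span B" "card B = dim (range A)"
    by (rule basis_exists)
  have fB: "finite B" using B(2) by (rule finiteI_independent)
  have rB: "card B < CARD('p) * (CARD('p) + 1) div 2"
    using B(4) dim_rangeA_le[OF symA] rank by linarith
  define N0 where "N0 = (\<Union>I\<in>{I::'n set. card I = CARD('p)}. Fmap I ` span (GG I B))"
  have "negligible N0"
    unfolding N0_def
    by (rule negligible_Union) (auto intro: neg_piece[OF _ fB rB])
  then have "N0 \<in> null_sets (completion lborel)" by (simp add: negligible_iff_null_sets)
  then obtain N where N: "N \<in> null_sets lborel" "N0 \<subseteq> N"
    by (auto simp: null_sets_completion_iff2)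
  have spanB: "span (range A) \<subseteq> span B"
    using span_mono[OF B(3)] by (simp add: span_span)
  have main: "P_optimal A b (sym_part M) Y \<and> sdp_optimal A b (sym_part M) (Y ** transpose Y)"
    if M: "M \<notin> N" and Y: "Y \<in> Mp A b" and soc: "second_order_critical A b (sym_part M) Y"
    for M and Y :: "real^'p^'n"
  proof (cases "\<exists>z. z \<noteq> 0 \<and> Y *v z = 0")
    case True
    then obtain z where "z \<noteq> 0" "Y *v z = 0" by blast
    then show ?thesis using good_case[OF Y soc] by blast
  next
    case False
    then have full: "\<forall>z. Y *v z = 0 \<longrightarrow> z = 0" by blast
    define C where "C = sym_part M"
    define \<nu> where "\<nu> = mu A C Y"
    define S where "S = Smat A C Y"
    have Seq: "S = C - Aadj A \<nu>" by (simp add: S_def Smat_def \<nu>_def)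
    have Cent: "C$i$k = (M$i$k + M$k$i) / 2" for i k
      by (simp add: C_def sym_part_def transpose_def)
    have Aent: "A j $ i $ k = A j $ k $ i" for j i k
      using symA sym_mat_iff by blast
    have Xent: "Aadj A \<nu> $ i $ k = Aadj A \<nu> $ k $ i" for i k
      by (simp add: Aadj_def Aent)
    have Sent: "S$i$k = S$k$i" for i k
      by (simp add: Seq Cent Xent)
    have symS: "transpose S = S" by (simp add: vec_eq_iff transpose_def Sent)
    have SY: "S ** Y = 0"
      using soc unfolding second_order_critical_def critical_def S_def C_def by simp
    obtain I Q where cI: "card I = CARD('p)" and Q1: "\<forall>i\<in>I. \<forall>k. Q$i$k = 0"
      and Q2: "\<forall>i k. k \<notin> I \<longrightarrow> Q$i$k = (if i = k then 1 else 0)"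
      and SQ: "S = transpose Q ** (DJ I ** S ** DJ I) ** Q"
      using chart[OF full symS SY] by blast
    define Z where "Z = DJ I - Q"
    define R where "R = DJ I ** S ** DJ I"
    define X where "X = Aadj A \<nu>"
    define K where "K = (1/2) *\<^sub>R (M - transpose M)"
    have DJent: "DJ I $ i $ k = (if i = k \<and> i \<notin> I then 1 else 0)" for i k
      by (simp add: DJ_def)
    have Zc: "\<forall>i k. Z$i$k \<noteq> 0 \<longrightarrow> i \<notin> I \<and> k \<in> I"
    proof (intro allI impI)
      fix i k assume h: "Z$i$k \<noteq> 0"
      show "i \<notin> I \<and> k \<in> I"
      proof (rule ccontr)
        assume "\<not> (i \<notin> I \<and> k \<in> I)"
        then consider "i \<in> I" | "k \<notin> I" by blast
        then have "Z$i$k = 0"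
        proof cases
          case 1 then show ?thesis using Q1 by (simp add: Z_def DJent)
        next
          case 2 then show ?thesis using Q2 by (simp add: Z_def DJent)
        qed
        then show False using h by simp
      qed
    qed
    have Rent: "R$i$k = (if k \<notin> I then (if i \<notin> I then S$i$k else 0) else 0)" for i k
      by (simp add: R_def mult_DJ DJ_mult)
    have Rs: "\<forall>i k. R$i$k = R$k$i" using Sent by (simp add: Rent)
    have Rsupp: "\<forall>i k. R$i$k \<noteq> 0 \<longrightarrow> i \<in> - I \<and> k \<in> - I" by (simp add: Rent)
    have Xin: "X \<in> span B"
    proof -
      have "X \<in> span (range A)"
        unfolding X_def Aadj_def by (intro span_sum span_scale span_base) auto
      then show ?thesis using spanB by blast
    qed
    have Kc: "\<forall>i k. K$i$k = - K$k$i" by (auto simp add: K_def transpose_def field_simps)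
    have "(Z,R,X,K) \<in> span (GG I B)" by (rule GG_mem[OF Zc Rs Rsupp Xin Kc])
    moreover have "Fmap I (Z,R,X,K) = M"
    proof -
      have "Fmap I (Z,R,X,K) = transpose Q ** R ** Q + X + K"
        by (simp add: Fmap_def Z_def)
      also have "\<dots> = S + X + K" using SQ by (simp add: R_def)
      also have "\<dots> = M"
        by (simp add: Seq X_def K_def C_def sym_part_def vec_eq_iff transpose_def field_simps)
      finally show ?thesis .
    qed
    ultimately have "M \<in> N0" unfolding N0_def using cI by blast
    then show ?thesis using M N(2) by blast
  qed
  show ?thesis
    by (rule bexI[OF _ N(1)]) (use main in \<open>auto simp: Let_def\<close>)
qed

end
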